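(* Consider the distributed quantized weight-balancing algorithm described in the context on a strongly connected digraph with $N$ nodes, with step-size $\gamma(k)=2^{-n}$ for $2^n-1\le k\le 2^{n+1}-2$. Let $\tilde T=3N(N-1)N^{2N}$ and let $k_0\in\mathbb{Z}_{++}$ be such that $\gamma(k)=\gamma(k_0)$ for all $k\in[k_0,k_0+\tilde T]$. Let $\tau\ge k_0$ be an integer such that $\Vert\boldsymbol{\epsilon}(\tau-1)\Vert_1<2N(N-1)\gamma(\tau-1)$ and $\Vert\boldsymbol{\epsilon}(\tau)\Vert_1\ge 2N(N-1)\gamma(\tau)$. Then there exists an integer $t\in[1,\tilde T]$ such that $\Vert\boldsymbol{\epsilon}(\tau+t)\Vert_1<2N(N-1)\gamma(\tau+t)$.
   Context: $\mathcal{G}=(\mathcal{V},\mathcal{E})$, $\mathcal{V}=\{1,\dots,N\}$, no self-loops; $\mathcal{N}_i^-=\{j:(j,i)\in\mathcal{E}\}$, $\mathcal{N}_i^+=\{j:(i,j)\in\mathcal{E}\}$, $d_i^+=|\mathcal{N}_i^+|$. Algorithm: $a_{ij}(0)=1$ if $j\in\mathcal{N}_i^-$ and $0$ otherwise; $b_i(k)=\sum_{j\in\mathcal{N}_i^-}a_{ij}(k)-\sum_{j\in\mathcal{N}_i^+}a_{ji}(k)$; $n_i(k)=1$ if $b_i(k)\ge d_i^+\gamma(k)$, else $0$; $a_{ij}(k+1)=a_{ij}(k)+n_j(k)\gamma(k)$ for $j\in\mathcal{N}_i^-$. $\boldsymbol{\epsilon}(k)=(|b_i(k)|)_{i=1}^N$.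 *)

theory Defs
  imports Complex_Main
begin

definition wb_gamma :: "nat \<Rightarrow> real" where
  "wb_gamma k = (1/2) ^ (THE n::nat. 2^n \<le> k + 1 \<and> k + 1 < 2^(Suc n))"

definition in_nbrs :: "nat \<Rightarrow> (nat \<times> nat) set \<Rightarrow> nat \<Rightarrow> nat set" where
  "in_nbrs N E i = {j \<in> {1..N}. (j, i) \<in> E}"

definition out_nbrs :: "nat \<Rightarrow> (nat \<times> nat) set \<Rightarrow> nat \<Rightarrow> nat set" where
  "out_nbrs N E i = {j \<in> {1..N}. (i, j) \<in> E}"

definition out_deg :: "nat \<Rightarrow> (nat \<times> nat) set \<Rightarrow> nat \<Rightarrow> nat" where
  "out_deg N E i = card (out_nbrs N E i)"

text \<open>Weight imbalance b_i for a weight assignment a (a i j = weight of edge (j,i)).\<close>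
definition imbal :: "nat \<Rightarrow> (nat \<times> nat) set \<Rightarrow> (nat \<Rightarrow> nat \<Rightarrow> real) \<Rightarrow> nat \<Rightarrow> real" where
  "imbal N E a i = (\<Sum>j\<in>in_nbrs N E i. a i j) - (\<Sum>j\<in>out_nbrs N E i. a j i)"

fun wb_a :: "nat \<Rightarrow> (nat \<times> nat) set \<Rightarrow> nat \<Rightarrow> nat \<Rightarrow> nat \<Rightarrow> real" where
  "wb_a N E 0 = (\<lambda>i j. if j \<in> in_nbrs N E i then 1 else 0)"
| "wb_a N E (Suc k) = (\<lambda>i j.
     if j \<in> in_nbrs N E i
     then wb_a N E k i j +
          (if imbal N E (wb_a N E k) j \<ge> real (out_deg N E j) * wb_gamma k then wb_gamma k else 0)
     else wb_a N E k i j)"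

definition wb_b :: "nat \<Rightarrow> (nat \<times> nat) set \<Rightarrow> nat \<Rightarrow> nat \<Rightarrow> real" where
  "wb_b N E k i = imbal N E (wb_a N E k) i"

definition eps_norm1 :: "nat \<Rightarrow> (nat \<times> nat) set \<Rightarrow> nat \<Rightarrow> real" where
  "eps_norm1 N E k = (\<Sum>i\<in>{1..N}. \<bar>wb_b N E k i\<bar>)"

definition strongly_connected :: "nat \<Rightarrow> (nat \<times> nat) set \<Rightarrow> bool" where
  "strongly_connected N E \<longleftrightarrow> (\<forall>i\<in>{1..N}. \<forall>j\<in>{1..N}. (i, j) \<in> E\<^sup>*)"

end

theory Submission
  imports Defs
begin


definition gexp :: "nat \<Rightarrow> nat" where
  "gexp k = (THE n::nat. 2^n \<le> k + 1 \<and> k + 1 < 2^(Suc n))"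

lemma pow_lt_aux: "Suc m \<le> n \<Longrightarrow> (2::nat)^(Suc m) \<le> 2^n"
  by (rule power_increasing) simp_all

lemma gexp_uniq_aux:
  assumes "2^m \<le> K" "K < (2::nat)^(Suc m)" "2^n \<le> K" "K < (2::nat)^(Suc n)"
  shows "m = n"
proof (rule ccontr)
  assume "m \<noteq> n"
  then consider "Suc m \<le> n" | "Suc n \<le> m" by linarith
  then show False
  proof cases
    case 1
    from pow_lt_aux[OF this] assms(2,3) show False by linarith
  next
    case 2
    from pow_lt_aux[OF this] assms(1,4) show False by linarith
  qed
qed

lemma gexp_unique:
  assumes "2^n \<le> k + 1" "k + 1 < (2::nat)^(Suc n)"
  shows "gexp k = n"
  unfolding gexp_def
proof (rule the_equality)
  show "2^n \<le> k + 1 \<and> k + 1 < (2::nat)^(Suc n)" using assms by blast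
next
  fix m assume "2^m \<le> k + 1 \<and> k + 1 < (2::nat)^(Suc m)"
  then show "m = n" using gexp_uniq_aux[of m "k+1" n] assms by blast
qed

lemma gexp_prop: "2^(gexp k) \<le> k + 1 \<and> k + 1 < (2::nat)^(Suc (gexp k))"
proof -
  obtain n where n: "2^n \<le> k + 1" "k + 1 < (2::nat)^(n+1)"
    using ex_power_ivl1[of 2 "k+1"] by auto
  then have "k + 1 < (2::nat)^(Suc n)" by simp
  with n(1) have "gexp k = n" by (rule gexp_unique)
  with n show ?thesis by simp
qed

lemma gamma_gexp: "wb_gamma k = (1/2) ^ gexp k"
  unfolding wb_gamma_def gexp_def by (rule refl)

lemma gamma_pos: "wb_gamma k > 0"
  unfolding gamma_gexp by simp

lemma gexp_mono: assumes "k \<le> k'" shows "gexp k \<le> gexp k'"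
proof (rule ccontr)
  assume "\<not> ?thesis"
  then have "Suc (gexp k') \<le> gexp k" by simp
  from pow_lt_aux[OF this] gexp_prop[of k] gexp_prop[of k'] assms show False by linarith
qed

lemma gexp_step: "gexp (Suc k) \<le> Suc (gexp k)"
proof (rule ccontr)
  assume "\<not> ?thesis"
  then have "Suc (Suc (gexp k)) \<le> gexp (Suc k)" by simp
  from pow_lt_aux[OF this] gexp_prop[of k] gexp_prop[of "Suc k"] show False by simp
qed

lemma gamma_step: "wb_gamma k \<le> 2 * wb_gamma (Suc k)"
proof -
  have "gexp k \<le> gexp (Suc k)" by (rule gexp_mono) simp
  moreover have "gexp (Suc k) \<le> Suc (gexp k)" by (rule gexp_step)
  ultimately consider "gexp (Suc k) = gexp k" | "gexp (Suc k) = Suc (gexp k)" by linarith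
  then show ?thesis unfolding gamma_gexp by cases auto
qed

lemma gamma_jump:
  assumes "wb_gamma (Suc k) \<noteq> wb_gamma k" "Suc k \<le> m" "m \<le> 2 * Suc k"
  shows "wb_gamma m = wb_gamma (Suc k)"
proof -
  have "gexp k \<le> gexp (Suc k)" by (rule gexp_mono) simp
  moreover have "gexp (Suc k) \<le> Suc (gexp k)" by (rule gexp_step)
  moreover have "gexp (Suc k) \<noteq> gexp k" using assms(1) unfolding gamma_gexp by auto
  ultimately have e: "gexp (Suc k) = Suc (gexp k)" by linarith
  have p1: "2^(gexp k) \<le> k + 1" "k + 1 < (2::nat)^(Suc (gexp k))" using gexp_prop[of k] by auto
  have p2: "2^(gexp (Suc k)) \<le> Suc k + 1" using gexp_prop[of "Suc k"] by auto
  have "2 ^ gexp (Suc k) = Suc k + 1" using p1(2) p2 unfolding e by linarith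
  then have "2 ^ gexp (Suc k) \<le> m + 1" "m + 1 < (2::nat)^(Suc (gexp (Suc k)))"
    using assms(2,3) by auto
  then have "gexp m = gexp (Suc k)" by (rule gexp_unique)
  then show ?thesis unfolding gamma_gexp by simp
qed




lemma sum_filter_if: "finite A \<Longrightarrow> sum f {x\<in>A. P x} = (\<Sum>x\<in>A. if P x then f x else 0)"
  by (simp add: sum.inter_filter)

lemma double_count:
  "(\<Sum>i\<in>{1..N}. \<Sum>j\<in>in_nbrs N E i. (f i j::real)) = (\<Sum>j\<in>{1..N}. \<Sum>i\<in>out_nbrs N E j. f i j)"
proof -
  have "(\<Sum>i\<in>{1..N}. \<Sum>j\<in>in_nbrs N E i. f i j) = (\<Sum>i\<in>{1..N}. \<Sum>j\<in>{1..N}. if (j,i) \<in> E then f i j else 0)"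
    unfolding in_nbrs_def by (intro sum.cong refl sum_filter_if) simp
  also have "\<dots> = (\<Sum>j\<in>{1..N}. \<Sum>i\<in>{1..N}. if (j,i) \<in> E then f i j else 0)"
    by (rule sum.swap)
  also have "\<dots> = (\<Sum>j\<in>{1..N}. \<Sum>i\<in>out_nbrs N E j. f i j)"
    unfolding out_nbrs_def by (intro sum.cong refl sum_filter_if[symmetric]) simp
  finally show ?thesis .
qed

definition fire :: "nat \<Rightarrow> (nat \<times> nat) set \<Rightarrow> nat \<Rightarrow> nat \<Rightarrow> bool" where
  "fire N E k j \<longleftrightarrow> real (out_deg N E j) * wb_gamma k \<le> wb_b N E k j"

lemma a_Suc_in:
  "j \<in> in_nbrs N E i \<Longrightarrow> wb_a N E (Suc k) i j = wb_a N E k i j + (if fire N E k j then wb_gamma k else 0)"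
  unfolding fire_def wb_b_def by simp

lemma in_out: "i \<in> {1..N} \<Longrightarrow> j \<in> out_nbrs N E i \<Longrightarrow> i \<in> in_nbrs N E j"
  unfolding in_nbrs_def out_nbrs_def by auto

lemma finite_in: "finite (in_nbrs N E i)" unfolding in_nbrs_def by simp
lemma finite_out: "finite (out_nbrs N E i)" unfolding out_nbrs_def by simp

lemma b_Suc:
  assumes "i \<in> {1..N}"
  shows "wb_b N E (Suc k) i = wb_b N E k i - (if fire N E k i then real (out_deg N E i) * wb_gamma k else 0)
          + wb_gamma k * real (card {j \<in> in_nbrs N E i. fire N E k j})"
proof -
  have s1: "(\<Sum>j\<in>in_nbrs N E i. wb_a N E (Suc k) i j) = (\<Sum>j\<in>in_nbrs N E i. wb_a N E k i j)
      + wb_gamma k * real (card {j \<in> in_nbrs N E i. fire N E k j})"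
  proof -
    have "(\<Sum>j\<in>in_nbrs N E i. wb_a N E (Suc k) i j) = (\<Sum>j\<in>in_nbrs N E i. wb_a N E k i j + (if fire N E k j then wb_gamma k else 0))"
      by (rule sum.cong[OF refl], rule a_Suc_in, assumption)
    also have "\<dots> = (\<Sum>j\<in>in_nbrs N E i. wb_a N E k i j) + (\<Sum>j\<in>in_nbrs N E i. (if fire N E k j then wb_gamma k else 0))"
      by (rule sum.distrib)
    also have "(\<Sum>j\<in>in_nbrs N E i. (if fire N E k j then wb_gamma k else 0)) = wb_gamma k * real (card {j \<in> in_nbrs N E i. fire N E k j})"
      using finite_in[of N E i] by (simp add: sum_filter_if[symmetric])
    finally show ?thesis .
  qed
  have s2: "(\<Sum>j\<in>out_nbrs N E i. wb_a N E (Suc k) j i) = (\<Sum>j\<in>out_nbrs N E i. wb_a N E k j i)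
      + (if fire N E k i then real (out_deg N E i) * wb_gamma k else 0)"
  proof -
    have "(\<Sum>j\<in>out_nbrs N E i. wb_a N E (Suc k) j i) = (\<Sum>j\<in>out_nbrs N E i. wb_a N E k j i + (if fire N E k i then wb_gamma k else 0))"
      by (rule sum.cong[OF refl], rule a_Suc_in, rule in_out[OF assms], assumption)
    also have "\<dots> = (\<Sum>j\<in>out_nbrs N E i. wb_a N E k j i) + (\<Sum>j\<in>out_nbrs N E i. (if fire N E k i then wb_gamma k else 0))"
      by (rule sum.distrib)
    also have "(\<Sum>j\<in>out_nbrs N E i. (if fire N E k i then wb_gamma k else 0)) = (if fire N E k i then real (out_deg N E i) * wb_gamma k else 0)"
      by (simp add: out_deg_def)
    finally show ?thesis .
  qed
  show ?thesis unfolding wb_b_def imbal_def s1 s2 unfolding wb_b_def imbal_def by simp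
qed

lemma sum_b_zero: "(\<Sum>i\<in>{1..N}. wb_b N E k i) = 0"
proof -
  have "(\<Sum>i\<in>{1..N}. wb_b N E k i) = (\<Sum>i\<in>{1..N}. \<Sum>j\<in>in_nbrs N E i. wb_a N E k i j)
     - (\<Sum>i\<in>{1..N}. \<Sum>j\<in>out_nbrs N E i. wb_a N E k j i)"
    unfolding wb_b_def imbal_def by (simp add: sum_subtractf)
  also have "(\<Sum>i\<in>{1..N}. \<Sum>j\<in>in_nbrs N E i. wb_a N E k i j) = (\<Sum>i\<in>{1..N}. \<Sum>j\<in>out_nbrs N E i. wb_a N E k j i)"
    by (rule double_count)
  finally show ?thesis by simp
qed

lemma sum_recv: "(\<Sum>i\<in>{1..N}. real (card {j \<in> in_nbrs N E i. fire N E k j}))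
   = (\<Sum>j\<in>{1..N}. if fire N E k j then real (out_deg N E j) else 0)"
proof -
  have "(\<Sum>i\<in>{1..N}. real (card {j \<in> in_nbrs N E i. fire N E k j}))
     = (\<Sum>i\<in>{1..N}. \<Sum>j\<in>in_nbrs N E i. if fire N E k j then 1 else 0)"
    using finite_in by (simp add: sum_filter_if[symmetric])
  also have "\<dots> = (\<Sum>j\<in>{1..N}. \<Sum>i\<in>out_nbrs N E j. if fire N E k j then 1 else 0)"
    by (rule double_count)
  also have "\<dots> = (\<Sum>j\<in>{1..N}. if fire N E k j then real (out_deg N E j) else 0)"
    by (intro sum.cong refl) (auto simp: out_deg_def)
  finally show ?thesis .
qed

lemma eps_mono: "eps_norm1 N E (Suc k) \<le> eps_norm1 N E k"
proof -
  let ?g = "wb_gamma k"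
  let ?r = "\<lambda>i. real (card {j \<in> in_nbrs N E i. fire N E k j})"
  let ?f = "\<lambda>i. if fire N E k i then real (out_deg N E i) * ?g else 0"
  have pt: "\<bar>wb_b N E (Suc k) i\<bar> \<le> \<bar>wb_b N E k i\<bar> - ?f i + ?g * ?r i" if "i \<in> {1..N}" for i
  proof -
    have "?g > 0" by (rule gamma_pos)
    then have "?g * ?r i \<ge> 0" by simp
    moreover have "\<bar>wb_b N E k i - ?f i\<bar> = \<bar>wb_b N E k i\<bar> - ?f i"
    proof (cases "fire N E k i")
      case True
      then have "real (out_deg N E i) * ?g \<le> wb_b N E k i" by (simp add: fire_def)
      moreover have "real (out_deg N E i) * ?g \<ge> 0" using \<open>?g > 0\<close> by simp
      ultimately show ?thesis using True by simp
    qed simp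
    ultimately show ?thesis unfolding b_Suc[OF that] by linarith
  qed
  have "eps_norm1 N E (Suc k) \<le> (\<Sum>i\<in>{1..N}. \<bar>wb_b N E k i\<bar> - ?f i + ?g * ?r i)"
    unfolding eps_norm1_def by (rule sum_mono) (rule pt)
  also have "\<dots> = eps_norm1 N E k - (\<Sum>i\<in>{1..N}. ?f i) + ?g * (\<Sum>i\<in>{1..N}. ?r i)"
    unfolding eps_norm1_def by (simp add: sum.distrib sum_subtractf sum_distrib_left)
  also have "?g * (\<Sum>i\<in>{1..N}. ?r i) = (\<Sum>i\<in>{1..N}. ?f i)"
    unfolding sum_recv sum_distrib_left by (rule sum.cong) auto
  finally show ?thesis by simp
qed




lemma eps_nonneg: "eps_norm1 N E k \<ge> 0"
  unfolding eps_norm1_def by (rule sum_nonneg) simp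

lemma abs_le_eps: "i \<in> {1..N} \<Longrightarrow> \<bar>wb_b N E k i\<bar> \<le> eps_norm1 N E k"
  unfolding eps_norm1_def by (rule member_le_sum) auto

lemma eps_antimono: "s \<le> e \<Longrightarrow> eps_norm1 N E e \<le> eps_norm1 N E s"
proof (induction e rule: dec_induct)
  case base then show ?case by simp
next
  case (step n) then show ?case using eps_mono[of N E n] by linarith
qed

lemma deg_bound:
  assumes noloop: "\<forall>i. (i, i) \<notin> E" and "i \<in> {1..N}"
  shows "out_deg N E i \<le> N - 1"
proof -
  have "out_nbrs N E i \<subseteq> {1..N} - {i}" unfolding out_nbrs_def using noloop by auto
  then have "card (out_nbrs N E i) \<le> card ({1..N} - {i})" by (rule card_mono[rotated]) simp
  also have "\<dots> = N - 1" using assms(2) by simp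
  finally show ?thesis unfolding out_deg_def .
qed

lemma no_fire_small:
  assumes noloop: "\<forall>i. (i, i) \<notin> E" and N2: "N \<ge> 2"
    and nf: "\<forall>j\<in>{1..N}. \<not> fire N E k j"
  shows "eps_norm1 N E k < 2 * real N * (real N - 1) * wb_gamma k"
proof -
  let ?g = "wb_gamma k"
  have gp: "?g > 0" by (rule gamma_pos)
  have pos: "(real N - 1) * ?g > 0" using N2 gp by simp
  have bi: "max (wb_b N E k i) 0 < (real N - 1) * ?g" if "i \<in> {1..N}" for i
  proof -
    have "\<not> fire N E k i" using nf that by blast
    then have "wb_b N E k i < real (out_deg N E i) * ?g" unfolding fire_def by simp
    also have "\<dots> \<le> (real N - 1) * ?g"
      using deg_bound[OF noloop that] N2 gp by (intro mult_right_mono) auto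
    finally show ?thesis using pos by simp
  qed
  have "eps_norm1 N E k = (\<Sum>i\<in>{1..N}. 2 * max (wb_b N E k i) 0 - wb_b N E k i)"
    unfolding eps_norm1_def by (intro sum.cong refl) auto
  also have "\<dots> = 2 * (\<Sum>i\<in>{1..N}. max (wb_b N E k i) 0) - (\<Sum>i\<in>{1..N}. wb_b N E k i)"
    by (simp add: sum_subtractf sum_distrib_left)
  also have "(\<Sum>i\<in>{1..N}. wb_b N E k i) = 0" by (rule sum_b_zero)
  also have "(\<Sum>i\<in>{1..N}. max (wb_b N E k i) 0) < (\<Sum>i\<in>{1..N}. (real N - 1) * ?g)"
    using N2 by (intro sum_strict_mono bi) auto
  also have "(\<Sum>i\<in>{1..N}. (real N - 1) * ?g) = real N * (real N - 1) * ?g" by simp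
  finally show ?thesis by simp
qed

lemma crossing:
  assumes "(x0, y0) \<in> E\<^sup>*" "y0 \<in> R" "x0 \<notin> R"
  shows "\<exists>x y. (x, y) \<in> E \<and> x \<notin> R \<and> y \<in> R"
  using assms
proof (induction rule: rtrancl_induct)
  case base then show ?case by simp
next
  case (step y z)
  show ?case
  proof (cases "y \<in> R")
    case True then show ?thesis using step by blast
  next
    case False then show ?thesis using step by blast
  qed
qed




lemma last_fire_bound:
  assumes v: "v \<in> {1..N}" and gconst: "\<forall>k. s \<le> k \<and> k < e \<longrightarrow> wb_gamma k = g0" and g0: "g0 > 0"
    and tv: "s \<le> tv" "tv < e" "fire N E tv v"
    and nolater: "\<forall>k. tv < k \<and> k < e \<longrightarrow> \<not> fire N E k v"
  shows "tv + 1 + n \<le> e \<Longrightarrow> wb_b N E (tv+1+n) v \<ge> g0 * real (card {u \<in> in_nbrs N E v. \<exists>m. tv \<le> m \<and> m < tv+1+n \<and> fire N E m u})"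
proof (induction n)
  case 0
  have g: "wb_gamma tv = g0" using gconst tv by auto
  have set: "{u \<in> in_nbrs N E v. \<exists>m. tv \<le> m \<and> m < tv+1+0 \<and> fire N E m u} = {u \<in> in_nbrs N E v. fire N E tv u}"
    by (auto, metis le_antisym less_Suc_eq_le)
  have "real (out_deg N E v) * g0 \<le> wb_b N E tv v" using tv(3) g unfolding fire_def by simp
  then show ?case unfolding set using b_Suc[OF v, where k=tv] tv(3) g by simp
next
  case (Suc n)
  let ?k = "tv + 1 + n"
  let ?A = "\<lambda>n. {u \<in> in_nbrs N E v. \<exists>m. tv \<le> m \<and> m < tv+1+n \<and> fire N E m u}"
  let ?F = "{u \<in> in_nbrs N E v. fire N E ?k u}"
  have IH: "wb_b N E ?k v \<ge> g0 * real (card (?A n))" using Suc by simp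
  have g: "wb_gamma ?k = g0" using gconst tv Suc.prems by auto
  have nf: "\<not> fire N E ?k v" using nolater Suc.prems by auto
  have eq: "wb_b N E (Suc ?k) v = wb_b N E ?k v + g0 * real (card ?F)"
    using b_Suc[OF v, where k="?k"] nf g by simp
  have "?A (Suc n) \<subseteq> ?A n \<union> ?F" by (auto simp: less_Suc_eq)
  then have "card (?A (Suc n)) \<le> card (?A n \<union> ?F)" by (intro card_mono) (auto intro: finite_subset[OF _ finite_in])
  also have "\<dots> \<le> card (?A n) + card ?F" by (rule card_Un_le)
  finally have "real (card (?A (Suc n))) \<le> real (card (?A n)) + real (card ?F)" by linarith
  then have "g0 * real (card (?A (Suc n))) \<le> g0 * real (card (?A n)) + g0 * real (card ?F)"
    using g0 by (simp add: mult_left_mono distrib_left[symmetric])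
  then show ?case using IH eq by (simp add: add.assoc)
qed

lemma rtrancl_mono_fun:
  assumes "(a, b) \<in> E\<^sup>*" "\<forall>x y. (x, y) \<in> E \<longrightarrow> (t x :: nat) < t y"
  shows "t a \<le> t b"
  using assms(1)
proof (induction rule: rtrancl_induct)
  case base then show ?case by simp
next
  case (step y z) then show ?case using assms(2) by fastforce
qed

lemma not_all_fire:
  assumes edges: "E \<subseteq> {1..N} \<times> {1..N}" and sc: "strongly_connected N E" and N2: "N \<ge> 2"
    and gconst: "\<forall>k. s \<le> k \<and> k < e \<longrightarrow> wb_gamma k = g0"
  shows "\<exists>v\<in>{1..N}. \<forall>k. s \<le> k \<and> k < e \<longrightarrow> \<not> fire N E k v"
proof (rule ccontr)
  assume "\<not> ?thesis"
  then have allf: "\<forall>v\<in>{1..N}. \<exists>k. s \<le> k \<and> k < e \<and> fire N E k v" by blast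
  have g0: "g0 > 0"
  proof -
    obtain k where "s \<le> k \<and> k < e" using allf N2 by force
    then show ?thesis using gconst gamma_pos[of k] by auto
  qed
  define t where "t v = Max {k \<in> {s..<e}. fire N E k v}" for v
  have tprop: "s \<le> t v \<and> t v < e \<and> fire N E (t v) v" if "v \<in> {1..N}" for v
  proof -
    have "{k \<in> {s..<e}. fire N E k v} \<noteq> {}" using allf that by auto
    then have "t v \<in> {k \<in> {s..<e}. fire N E k v}" unfolding t_def by (intro Max_in) auto
    then show ?thesis by auto
  qed
  have tmax: "k \<le> t v" if "v \<in> {1..N}" "s \<le> k" "k < e" "fire N E k v" for v k
    unfolding t_def using that by (intro Max_ge) auto
  have bnd: "wb_b N E e v \<ge> g0 * real (card {u \<in> in_nbrs N E v. t v \<le> t u})" if v: "v \<in> {1..N}" for v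
  proof -
    have nl: "\<forall>k. t v < k \<and> k < e \<longrightarrow> \<not> fire N E k v"
    proof (intro allI impI notI)
      fix k assume k: "t v < k \<and> k < e" and f: "fire N E k v"
      have "s \<le> k" using k tprop[OF v] by linarith
      then have "k \<le> t v" using tmax[OF v _ _ f] k by blast
      then show False using k by linarith
    qed
    define n where "n = e - (t v + 1)"
    have en: "t v + 1 + n = e" using tprop[OF v] unfolding n_def by simp
    have L: "wb_b N E e v \<ge> g0 * real (card {u \<in> in_nbrs N E v. \<exists>m. t v \<le> m \<and> m < e \<and> fire N E m u})"
      using last_fire_bound[OF v gconst g0 _ _ _ nl, of n] tprop[OF v] en by simp
    have "{u \<in> in_nbrs N E v. t v \<le> t u} \<subseteq> {u \<in> in_nbrs N E v. \<exists>m. t v \<le> m \<and> m < e \<and> fire N E m u}"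
    proof
      fix u assume u: "u \<in> {u \<in> in_nbrs N E v. t v \<le> t u}"
      then have "u \<in> {1..N}" unfolding in_nbrs_def by auto
      then show "u \<in> {u \<in> in_nbrs N E v. \<exists>m. t v \<le> m \<and> m < e \<and> fire N E m u}"
        using u tprop by auto
    qed
    then have "card {u \<in> in_nbrs N E v. t v \<le> t u} \<le> card {u \<in> in_nbrs N E v. \<exists>m. t v \<le> m \<and> m < e \<and> fire N E m u}"
      by (intro card_mono) (auto intro: finite_subset[OF _ finite_in])
    then have "g0 * real (card {u \<in> in_nbrs N E v. t v \<le> t u}) \<le> g0 * real (card {u \<in> in_nbrs N E v. \<exists>m. t v \<le> m \<and> m < e \<and> fire N E m u})"
      using g0 by (intro mult_left_mono) auto
    then show ?thesis using L by linarith
  qed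
  obtain x y where xy: "(x, y) \<in> E" "t y \<le> t x"
  proof -
    have "(1, 2) \<in> E\<^sup>*" using sc N2 unfolding strongly_connected_def by auto
    then obtain y1 where y1: "(1, y1) \<in> E" by (cases rule: converse_rtranclE) auto
    then have "y1 \<in> {1..N}" using edges by auto
    then have bk: "(y1, 1) \<in> E\<^sup>*" using sc N2 unfolding strongly_connected_def by auto
    show ?thesis
    proof (cases "\<forall>x y. (x, y) \<in> E \<longrightarrow> t x < t y")
      case True
      then have "t y1 \<le> t 1" using rtrancl_mono_fun[OF bk] by blast
      moreover have "t 1 < t y1" using True y1 by blast
      ultimately show ?thesis by simp
    next
      case False
      then show ?thesis using that by force
    qed
  qed
  have xV: "x \<in> {1..N}" "y \<in> {1..N}" using xy edges by auto
  have xin: "x \<in> {u \<in> in_nbrs N E y. t y \<le> t u}" using xy xV unfolding in_nbrs_def by auto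
  have c1: "card {u \<in> in_nbrs N E y. t y \<le> t u} \<ge> 1"
    using xin by (metis (no_types, lifting) One_nat_def Suc_leI card_gt_0_iff empty_iff finite_in finite_subset mem_Collect_eq subsetI)
  have "g0 * 1 \<le> g0 * real (card {u \<in> in_nbrs N E y. t y \<le> t u})" using c1 g0 by (intro mult_left_mono) auto
  also have "\<dots> \<le> (\<Sum>v\<in>{1..N}. g0 * real (card {u \<in> in_nbrs N E v. t v \<le> t u}))"
    using xV g0 by (intro member_le_sum) auto
  also have "\<dots> \<le> (\<Sum>v\<in>{1..N}. wb_b N E e v)" by (intro sum_mono bnd)
  also have "\<dots> = 0" by (rule sum_b_zero)
  finally show False using g0 by simp
qed




definition cnt :: "nat \<Rightarrow> (nat \<times> nat) set \<Rightarrow> nat \<Rightarrow> nat \<Rightarrow> nat \<Rightarrow> real" where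
  "cnt N E s n x = (\<Sum>k\<in>{s..<s+n}. if fire N E k x then 1 else 0)"

lemma cnt_nonneg: "cnt N E s n x \<ge> 0"
  unfolding cnt_def by (rule sum_nonneg) auto

lemma cnt_Suc: "cnt N E s (Suc n) x = cnt N E s n x + (if fire N E (s+n) x then 1 else 0)"
  unfolding cnt_def by (simp add: sum.atLeastLessThan_Suc)

lemma edge_count:
  assumes u: "u \<in> {1..N}" and w: "w \<in> in_nbrs N E u"
  shows "(\<forall>k. s \<le> k \<and> k < s+n \<longrightarrow> wb_gamma k = g0) \<Longrightarrow>
    g0 * cnt N E s n w \<le> wb_b N E (s+n) u - wb_b N E s u + real (out_deg N E u) * g0 * cnt N E s n u"
proof (induction n)
  case 0 then show ?case by (simp add: cnt_def)
next
  case (Suc n)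
  have IH: "g0 * cnt N E s n w \<le> wb_b N E (s+n) u - wb_b N E s u + real (out_deg N E u) * g0 * cnt N E s n u"
    using Suc by auto
  have g: "wb_gamma (s+n) = g0" using Suc.prems by auto
  have rec: "wb_b N E (Suc (s+n)) u = wb_b N E (s+n) u - (if fire N E (s+n) u then real (out_deg N E u) * g0 else 0)
          + g0 * real (card {j \<in> in_nbrs N E u. fire N E (s+n) j})"
    using b_Suc[OF u, where k="s+n"] g by simp
  have g0: "g0 > 0" using g gamma_pos by metis
  have c: "(if fire N E (s+n) w then 1 else 0) \<le> real (card {j \<in> in_nbrs N E u. fire N E (s+n) j})"
  proof (cases "fire N E (s+n) w")
    case True
    then have "w \<in> {j \<in> in_nbrs N E u. fire N E (s+n) j}" using w by simp
    then have "card {j \<in> in_nbrs N E u. fire N E (s+n) j} \<noteq> 0"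
      using finite_in[of N E u] by auto
    then show ?thesis using True by simp
  qed simp
  then have c': "g0 * (if fire N E (s+n) w then 1 else 0) \<le> g0 * real (card {j \<in> in_nbrs N E u. fire N E (s+n) j})"
    using g0 by (intro mult_left_mono) auto
  have e1: "g0 * cnt N E s (Suc n) w = g0 * cnt N E s n w + g0 * (if fire N E (s+n) w then 1 else 0)"
    unfolding cnt_Suc by (simp add: distrib_left)
  have e2: "real (out_deg N E u) * g0 * cnt N E s (Suc n) u = real (out_deg N E u) * g0 * cnt N E s n u
      + (if fire N E (s+n) u then real (out_deg N E u) * g0 else 0)"
    unfolding cnt_Suc by (simp add: distrib_left)
  show ?case unfolding e1 e2 using IH c' rec by simp
qed

lemma total_lower:
  assumes "\<forall>k. s \<le> k \<and> k < s+n \<longrightarrow> (\<exists>j\<in>{1..N}. fire N E k j)"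
  shows "real n \<le> (\<Sum>w\<in>{1..N}. cnt N E s n w)"
proof -
  have "(\<Sum>w\<in>{1..N}. cnt N E s n w) = (\<Sum>k\<in>{s..<s+n}. \<Sum>w\<in>{1..N}. if fire N E k w then 1 else 0)"
    unfolding cnt_def by (rule sum.swap)
  also have "\<dots> \<ge> (\<Sum>k\<in>{s..<s+n}. (1::real))"
  proof (rule sum_mono)
    fix k assume "k \<in> {s..<s+n}"
    then obtain j where j: "j \<in> {1..N}" "fire N E k j" using assms by auto
    have "(1::real) = (if fire N E k j then 1 else 0)" using j by simp
    also have "\<dots> \<le> (\<Sum>w\<in>{1..N}. if fire N E k w then 1 else 0)"
      using j by (intro member_le_sum) auto
    finally show "1 \<le> (\<Sum>w\<in>{1..N}. if fire N E k w then (1::real) else 0)" .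
  qed
  finally show ?thesis by simp
qed




lemma total_bound:
  assumes edges: "E \<subseteq> {1..N} \<times> {1..N}" and noloop: "\<forall>i. (i, i) \<notin> E"
    and sc: "strongly_connected N E" and N2: "N \<ge> 2"
    and gconst: "\<forall>k. s \<le> k \<and> k < s+n \<longrightarrow> wb_gamma k = g0" and g0: "g0 > 0"
    and v: "v \<in> {1..N}" and nfv: "\<forall>k. s \<le> k \<and> k < s+n \<longrightarrow> \<not> fire N E k v"
    and D: "2 * eps_norm1 N E s \<le> D * g0"
  shows "(\<Sum>w\<in>{1..N}. cnt N E s n w) \<le> D * real N ^ N"
proof -
  let ?c = "cnt N E s n"
  have N1: "1 \<le> real N" using N2 by simp
  have D0: "D \<ge> 0"
  proof (rule ccontr)
    assume "\<not> D \<ge> 0"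
    then have "D * g0 < 0" using g0 by (simp add: mult_neg_pos)
    then show False using D eps_nonneg[of N E s] by linarith
  qed
  have cv: "?c v = 0" unfolding cnt_def using nfv by (intro sum.neutral) auto
  have pair: "?c x \<le> D + (real N - 1) * ?c y" if xy: "(x, y) \<in> E" for x y
  proof -
    have xV: "x \<in> {1..N}" "y \<in> {1..N}" using xy edges by auto
    have xin: "x \<in> in_nbrs N E y" using xy xV unfolding in_nbrs_def by auto
    have ec: "g0 * ?c x \<le> wb_b N E (s+n) y - wb_b N E s y + real (out_deg N E y) * g0 * ?c y"
      using edge_count[OF xV(2) xin] gconst by blast
    have "wb_b N E (s+n) y - wb_b N E s y \<le> eps_norm1 N E (s+n) + eps_norm1 N E s"
      using abs_le_eps[OF xV(2), of E "s+n"] abs_le_eps[OF xV(2), of E s] by linarith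
    also have "\<dots> \<le> 2 * eps_norm1 N E s" using eps_antimono[of s "s+n" N E] by simp
    finally have b1: "wb_b N E (s+n) y - wb_b N E s y \<le> D * g0" using D by linarith
    have "real (out_deg N E y) \<le> real N - 1" using deg_bound[OF noloop xV(2)] N2 by simp
    then have "real (out_deg N E y) * (g0 * ?c y) \<le> (real N - 1) * (g0 * ?c y)"
      using g0 cnt_nonneg[of N E s n y] by (intro mult_right_mono) auto
    then have "g0 * ?c x \<le> g0 * (D + (real N - 1) * ?c y)"
      using ec b1 by (simp add: algebra_simps)
    then show ?thesis using g0 by simp
  qed
  define R where "R k = {w \<in> {1..N}. ?c w \<le> D * real N ^ k}" for k
  have Rsub: "R k \<subseteq> {1..N}" for k unfolding R_def by auto
  have Rmono: "R k \<subseteq> R (Suc k)" for k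
  proof
    fix w assume "w \<in> R k"
    then have w: "w \<in> {1..N}" "?c w \<le> D * real N ^ k" unfolding R_def by auto
    have "D * real N ^ k \<le> D * real N ^ Suc k"
    proof -
      have "real N ^ k \<le> real N ^ Suc k" by (rule power_increasing[OF _ N1]) simp
      then show ?thesis using D0 by (rule mult_left_mono)
    qed
    then show "w \<in> R (Suc k)" using w unfolding R_def by auto
  qed
  have cardR: "card (R k) \<ge> min (Suc k) N" for k
  proof (induction k)
    case 0
    have "v \<in> R 0" unfolding R_def using v cv D0 by simp
    moreover have "finite (R 0)" using finite_subset[OF Rsub[of 0]] by simp
    ultimately have "card (R 0) \<noteq> 0" by auto
    then have "card (R 0) \<ge> 1" by linarith
    then show ?case by simp
  next
    case (Suc k)
    show ?case
    proof (cases "R k = {1..N}")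
      case True
      then have "{1..N} \<subseteq> R (Suc k)" using Rmono[of k] by simp
      then have "R (Suc k) = {1..N}" using Rsub[of "Suc k"] by (intro equalityI)
      then show ?thesis by simp
    next
      case False
      have "\<not> {1..N} \<subseteq> R k"
      proof
        assume "{1..N} \<subseteq> R k"
        with Rsub[of k] have "R k = {1..N}" by (rule equalityI)
        with False show False by (rule notE)
      qed
      then obtain x0 where x0: "x0 \<in> {1..N}" "x0 \<notin> R k" unfolding subset_iff by blast
      have "0 \<le> D * real N ^ k" by (rule mult_nonneg_nonneg[OF D0 zero_le_power]) simp
      then have vR: "v \<in> R k" unfolding R_def using v cv by simp
      have "(x0, v) \<in> E\<^sup>*" using sc x0(1) v unfolding strongly_connected_def by blast
      then obtain x y where xy: "(x, y) \<in> E" "x \<notin> R k" "y \<in> R k"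
        using crossing[of x0 v E "R k"] vR x0 by blast
      have xV: "x \<in> {1..N}" using xy edges by auto
      have "?c y \<le> D * real N ^ k" using xy unfolding R_def by auto
      then have "(real N - 1) * ?c y \<le> (real N - 1) * (D * real N ^ k)"
        by (rule mult_left_mono) (use N1 in simp)
      moreover have "D * 1 \<le> D * real N ^ k" using D0 N2
        by (intro mult_left_mono one_le_power[OF N1] D0)
      ultimately have "?c x \<le> D * real N ^ k + (real N - 1) * (D * real N ^ k)"
        using pair[OF xy(1)] by linarith
      also have "\<dots> = D * real N ^ Suc k" by (simp add: algebra_simps)
      finally have "x \<in> R (Suc k)" unfolding R_def using xV by auto
      then have "insert x (R k) \<subseteq> R (Suc k)" using Rmono[of k] by auto
      then have "card (insert x (R k)) \<le> card (R (Suc k))"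
        by (intro card_mono) (auto intro: finite_subset[OF Rsub])
      moreover have "card (insert x (R k)) = Suc (card (R k))"
        using xy(2) finite_subset[OF Rsub[of k]] by simp
      ultimately show ?thesis using Suc.IH by linarith
    qed
  qed
  have "card (R (N - 1)) \<ge> N" using cardR[of "N - 1"] N2 by simp
  then have RV: "R (N - 1) = {1..N}"
    using Rsub[of "N-1"] by (intro card_seteq) auto
  have "(\<Sum>w\<in>{1..N}. ?c w) \<le> (\<Sum>w\<in>{1..N}. D * real N ^ (N - 1))"
  proof (rule sum_mono)
    fix w assume w: "w \<in> {1..N}"
    have "w \<in> R (N - 1)" unfolding RV by (rule w)
    then show "?c w \<le> D * real N ^ (N - 1)" unfolding R_def by blast
  qed
  also have "\<dots> = D * (real N * real N ^ (N - 1))" by simp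
  also have "real N * real N ^ (N - 1) = real N ^ N"
  proof -
    obtain m where m: "N = Suc m" using N2 by (cases N) auto
    show ?thesis unfolding m by simp
  qed
  finally show ?thesis .
qed




theorem lemma7:
  fixes N :: nat and E :: "(nat \<times> nat) set" and k0 \<tau> :: nat
  assumes edges: "E \<subseteq> {1..N} \<times> {1..N}"
    and no_loops: "\<forall>i. (i, i) \<notin> E"
    and sc: "strongly_connected N E"
    and k0_pos: "k0 \<ge> 1"
    and k0_const: "\<forall>k. k0 \<le> k \<and> k \<le> k0 + 3 * N * (N - 1) * N ^ (2 * N) \<longrightarrow> wb_gamma k = wb_gamma k0"
    and tau_ge: "\<tau> \<ge> k0"
    and prev: "eps_norm1 N E (\<tau> - 1) < 2 * real N * (real N - 1) * wb_gamma (\<tau> - 1)"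
    and cur: "eps_norm1 N E \<tau> \<ge> 2 * real N * (real N - 1) * wb_gamma \<tau>"
  shows "\<exists>t. 1 \<le> t \<and> t \<le> 3 * N * (N - 1) * N ^ (2 * N) \<and>
           eps_norm1 N E (\<tau> + t) < 2 * real N * (real N - 1) * wb_gamma (\<tau> + t)"
proof -
  define T where "T = 3 * N * (N - 1) * N ^ (2 * N)"
  have kc: "wb_gamma k = wb_gamma k0" if "k0 \<le> k" "k \<le> k0 + T" for k
    using k0_const that unfolding T_def[symmetric] by blast
  have N2: "N \<ge> 2"
  proof (rule ccontr)
    assume "\<not> N \<ge> 2"
    then consider "N = 0" | "N = 1" by linarith
    then have "2 * real N * (real N - 1) * wb_gamma (\<tau> - 1) = 0" by cases simp_all
    then show False using prev eps_nonneg[of N E "\<tau> - 1"] by linarith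
  qed
  obtain p where p: "\<tau> = Suc p" using k0_pos tau_ge by (cases \<tau>) auto
  have pm: "\<tau> - 1 = p" using p by simp
  have mono: "eps_norm1 N E \<tau> \<le> eps_norm1 N E p" unfolding p by (rule eps_mono)
  have gne: "wb_gamma (Suc p) \<noteq> wb_gamma p"
  proof
    assume "wb_gamma (Suc p) = wb_gamma p"
    then show False using prev cur mono unfolding pm p by simp
  qed
  have window: "wb_gamma k = wb_gamma \<tau>" if k: "\<tau> \<le> k" "k \<le> \<tau> + T" for k
  proof (cases "\<tau> = k0")
    case True
    then have "wb_gamma k = wb_gamma k0" using k by (intro kc) simp_all
    then show ?thesis using True by simp
  next
    case False
    then have pk: "k0 \<le> p" using tau_ge p by simp
    have "\<not> \<tau> \<le> k0 + T"
    proof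
      assume a: "\<tau> \<le> k0 + T"
      have "wb_gamma p = wb_gamma k0" using pk a p by (intro kc) simp_all
      moreover have "wb_gamma \<tau> = wb_gamma k0" using tau_ge a by (intro kc) simp_all
      ultimately show False using gne p by simp
    qed
    then have "k \<le> 2 * Suc p" using k p by simp
    then show ?thesis using gamma_jump[OF gne, of k] k p by simp
  qed
  show ?thesis
  proof (rule ccontr)
    assume neg: "\<not> ?thesis"
    have neg': "\<not> (\<exists>t. 1 \<le> t \<and> t \<le> T \<and>
           eps_norm1 N E (\<tau> + t) < 2 * real N * (real N - 1) * wb_gamma (\<tau> + t))"
      unfolding T_def by (rule neg)
    have big: "eps_norm1 N E (\<tau> + t) \<ge> 2 * real N * (real N - 1) * wb_gamma (\<tau> + t)"
      if "1 \<le> t" "t \<le> T" for t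
      using neg' that by (meson not_less)
    have firing: "\<forall>k. \<tau> \<le> k \<and> k < \<tau> + Suc T \<longrightarrow> (\<exists>j\<in>{1..N}. fire N E k j)"
    proof (intro allI impI)
      fix k assume k: "\<tau> \<le> k \<and> k < \<tau> + Suc T"
      show "\<exists>j\<in>{1..N}. fire N E k j"
      proof (rule ccontr)
        assume "\<not> (\<exists>j\<in>{1..N}. fire N E k j)"
        then have sm: "eps_norm1 N E k < 2 * real N * (real N - 1) * wb_gamma k"
          using no_fire_small[OF no_loops N2] by blast
        show False
        proof (cases "k = \<tau>")
          case True then show False using sm cur by simp
        next
          case False
          define t where "t = k - \<tau>"
          have t: "k = \<tau> + t" "1 \<le> t" "t \<le> T" using k False unfolding t_def by linarith+
          show False using big[OF t(2,3)] sm unfolding t(1) by simp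
        qed
      qed
    qed
    define g0 where "g0 = wb_gamma \<tau>"
    have g0: "g0 > 0" unfolding g0_def by (rule gamma_pos)
    have gconst: "\<forall>k. \<tau> \<le> k \<and> k < \<tau> + Suc T \<longrightarrow> wb_gamma k = g0"
    proof (intro allI impI)
      fix k assume "\<tau> \<le> k \<and> k < \<tau> + Suc T"
      then show "wb_gamma k = g0" unfolding g0_def by (intro window) auto
    qed
    obtain v where v: "v \<in> {1..N}" and nfv: "\<forall>k. \<tau> \<le> k \<and> k < \<tau> + Suc T \<longrightarrow> \<not> fire N E k v"
      using not_all_fire[OF edges sc N2 gconst] by blast
    define D where "D = 8 * real N * (real N - 1)"
    have NN: "real N * (real N - 1) \<ge> 0" using N2 by simp
    have gs: "wb_gamma p \<le> 2 * g0" unfolding g0_def p by (rule gamma_step)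
    have "2 * real N * (real N - 1) * wb_gamma p \<le> 2 * real N * (real N - 1) * (2 * g0)"
      using mult_right_mono[OF gs NN] by (simp add: algebra_simps)
    then have Dg: "2 * eps_norm1 N E \<tau> \<le> D * g0"
      using mono prev unfolding pm D_def by (simp add: algebra_simps)
    have up: "(\<Sum>w\<in>{1..N}. cnt N E \<tau> (Suc T) w) \<le> D * real N ^ N"
      using total_bound[OF edges no_loops sc N2 gconst g0 v nfv Dg] .
    have lo: "real (Suc T) \<le> (\<Sum>w\<in>{1..N}. cnt N E \<tau> (Suc T) w)"
      using total_lower[OF firing] .
    have N1: "(1::real) \<le> real N" using N2 by simp
    have P4: "4 \<le> real N ^ N"
    proof -
      have "real N ^ 2 \<le> real N ^ N" by (rule power_increasing[OF N2 N1])
      moreover have "4 \<le> real N ^ 2"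
      proof -
        have N2r: "2 \<le> real N" using N2 by simp
        have "2 * 2 \<le> real N * real N" by (rule mult_mono[OF N2r N2r]) simp_all
        then show ?thesis unfolding power2_eq_square by simp
      qed
      ultimately show ?thesis by linarith
    qed
    define X where "X = real N * (real N - 1) * real N ^ N"
    have X0: "X \<ge> 0" unfolding X_def using NN by simp
    have TX: "real T = 3 * X * real N ^ N"
    proof -
      have "real T = 3 * real N * real (N - 1) * real N ^ (2 * N)" unfolding T_def by simp
      also have "real (N - 1) = real N - 1" using N2 by simp
      also have "real N ^ (2 * N) = real N ^ N * real N ^ N" by (simp add: mult_2 power_add)
      finally show ?thesis unfolding X_def by (simp add: algebra_simps)
    qed
    have "D * real N ^ N = 8 * X" unfolding D_def X_def by (simp add: algebra_simps)
    also have "\<dots> \<le> 3 * X * 4" using X0 by simp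
    also have "\<dots> \<le> 3 * X * real N ^ N" using X0 P4 by (intro mult_left_mono) auto
    also have "\<dots> < real (Suc T)" using TX by simp
    finally show False using up lo by linarith
  qed
qed


end
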